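(* Let $f:[0,\infty)\to[0,\infty)$ be continuous and satisfy $f(f(x))=x\,f(x)$ for all $x\ge 0$. Then either $f(x)=0$ for all $x\ge0$, or $f(0)=0$, $f(1)=1$ and $f$ is strictly increasing on $[0,\infty)$. *)

theory Defs
  imports Complex_Main
begin

end

theory Submission
  imports Defs
begin

theorem proposition1:
  fixes f :: "real \<Rightarrow> real"
  assumes cont: "continuous_on {0..} f"
    and nonneg: "\<And>x. x \<ge> 0 \<Longrightarrow> f x \<ge> 0"
    and feq: "\<And>x. x \<ge> 0 \<Longrightarrow> f (f x) = x * f x"
  shows "(\<forall>x\<ge>0. f x = 0) \<or> (f 0 = 0 \<and> f 1 = 1 \<and> strict_mono_on {0..} f)"
proof -
  have cab: "continuous_on {a..b} f" if "0 \<le> a" for a b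
    using continuous_on_subset[OF cont] that by auto
  have f0: "f 0 = 0"
  proof -
    define a where "a = f 0"
    have a0: "a \<ge> 0" using nonneg a_def by simp
    have fa: "f a = 0" using feq[of 0] a_def by simp
    have "f (f a) = a * f a" using feq a0 by blast
    then show ?thesis using fa a_def by simp
  qed
  have inj: "x = y" if "x \<ge> 0" "y \<ge> 0" "f x = f y" "f x \<noteq> 0" for x y
  proof -
    have "x * f x = y * f y" using feq[OF that(1)] feq[OF that(2)] that(3) by metis
    then show ?thesis using that(3,4) by auto
  qed
  show ?thesis
  proof (cases "\<forall>x\<ge>0. f x = 0")
    case True then show ?thesis by simp
  next
    case False
    then obtain x0 where x0: "x0 \<ge> 0" "f x0 \<noteq> 0" by auto
    define y0 where "y0 = f x0"
    have y0: "y0 > 0" using x0 nonneg y0_def by force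
    have A: False if w: "0 < w" "w < z" "f w > 0" "f z = 0" for w z
    proof -
      obtain u where u: "0 \<le> u" "u \<le> w" "f u = f w / 2"
        using IVT'[of f 0 "f w / 2" w] f0 w cab[of 0 w] by auto
      obtain v where v: "w \<le> v" "v \<le> z" "f v = f w / 2"
        using IVT2'[of f z "f w / 2" w] w cab[of w z] by auto
      have "u = v" using inj[of u v] u v w by simp
      then have "u = w" using u v by simp
      then show False using u w by simp
    qed
    have B: "f t > 0" if t: "0 < t" "t \<le> y0" for t
    proof -
      obtain s where s: "0 \<le> s" "s \<le> x0" "f s = t"
        using IVT'[of f 0 t x0] f0 t x0 y0_def cab[of 0 x0] by auto
      have "s > 0" using s t f0 by (cases "s = 0") auto
      then show ?thesis using feq[of s] s t by simp
    qed
    have pos: "f z > 0" if "z > 0" for z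
    proof (rule ccontr)
      assume "\<not> f z > 0"
      then have fz: "f z = 0" using nonneg[of z] that by simp
      show False
      proof (cases "z \<le> y0")
        case True then show ?thesis using B[of z] fz that by simp
      next
        case False then show ?thesis using A[of y0 z] B[of y0] y0 fz by simp
      qed
    qed
    have sm: "strict_mono_on {0..} f"
    proof (rule strict_mono_onI)
      fix x y :: real assume xy: "x \<in> {0..}" "y \<in> {0..}" "x < y"
      show "f x < f y"
      proof (cases "x = 0")
        case True then show ?thesis using f0 pos xy by simp
      next
        case False
        show ?thesis
        proof (rule ccontr)
          assume "\<not> f x < f y"
          then have le: "f y \<le> f x" by simp
          have py: "f y > 0" using pos xy by simp
          obtain w where w: "0 \<le> w" "w \<le> x" "f w = f y"
            using IVT'[of f 0 "f y" x] f0 le py xy cab[of 0 x] by auto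
          have "w = y" using inj[of w y] w py xy by simp
          then show False using w xy by simp
        qed
      qed
    qed
    have f1: "f 1 = 1"
    proof -
      have "f (f 1) = f 1" using feq[of 1] by simp
      then show ?thesis using inj[of "f 1" 1] nonneg[of 1] pos[of 1] by simp
    qed
    show ?thesis using f0 f1 sm by simp
  qed
qed

end
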